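(* Let $P_1,\dots,P_M$ be monic real polynomials with $P_\ell(0)=1$, and suppose that for each $\ell$ there is an exponent $s_\ell$ such that the coefficient of $x^{s_\ell}$ in $P_\ell$ is a differentiable function $p_\ell(z)\ge 0$ of a variable $z>0$, while all other coefficients of $P_\ell$ are nonnegative constants. Let $y_1,\dots,y_M\in\mathcal C$ and $c_1,\dots,c_M\in\mathbb Q$ be such that $\sum_{\ell=1}^Mc_\ell\big(y_\ell(z)\wedge P_\ell(y_\ell(z))\big)=0$ in $\bigwedge^2\mathcal C$ (here $z\mapsto P_\ell(y_\ell(z))$ is viewed as an element of $\mathcal C$, with the coefficient $p_\ell$ evaluated at $z$). Then $$\frac{d}{dz}\sum_{\ell=1}^Mc_\ell\tilde L_{P_\ell}\big(y_\ell(z)\big)=\sum_{\ell=1}^Mc_\ell\frac{dp_\ell}{dz}\int_0^{y_\ell(z)}\frac{y^{s_\ell-1}}{P_\ell(y)}\,dy,$$ where on the left $P_\ell$ also depends on $z$ through $p_\ell$.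
   Context: $\mathcal C$ is the set of differentiable functions $\mathbb R_{>0}\to\mathbb R_{>0}$, regarded as an abelian group under pointwise multiplication. $\mathcal C\otimes\mathcal C$ denotes the rational vector space $\mathbb Q\otimes_{\mathbb Z}(\mathcal C\otimes_{\mathbb Z}\mathcal C)$; $\bigwedge^2\mathcal C=(\mathcal C\otimes\mathcal C)/S^2\mathcal C$, where $S^2\mathcal C$ is the subspace spanned by all $h\otimes h$, and $y_1\wedge y_2$ is the class of $y_1\otimes y_2$. For a monic polynomial $P$ with nonnegative coefficients and $P(0)=1$, $\tilde L_P(x)=\frac12\int_0^x\Big(\frac{\log P(y)}{y}-\frac{\log y}{P(y)}P'(y)\Big)dy$ for $x>0$; equivalently $\tilde L_P(x)=\int_0^x\frac{\log P(y)}{y}dy-\frac12\log x\log P(x)$. *)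

theory Defs
  imports "HOL-Analysis.Analysis" "HOL-Computational_Algebra.Polynomial"
begin

(* The group C: differentiable positive functions on (0,oo).  Each element is
   represented canonically by a function real => real that is 1 on (-oo,0]. *)
definition Cset :: "(real \<Rightarrow> real) set" where
  "Cset = {f. (\<forall>x>0. 0 < f x \<and> f differentiable (at x)) \<and> (\<forall>x\<le>0. f x = 1)}"

definition cnorm :: "(real \<Rightarrow> real) \<Rightarrow> (real \<Rightarrow> real)" where
  "cnorm f = (\<lambda>x. if 0 < x then f x else 1)"

definition cmul :: "(real \<Rightarrow> real) \<Rightarrow> (real \<Rightarrow> real) \<Rightarrow> (real \<Rightarrow> real)" where
  "cmul f g = (\<lambda>x. f x * g x)"

(* free Q-vector space on C x C: finitely supported functions to rat; basis vectors *)
definition fsingle :: "'a \<Rightarrow> 'a \<Rightarrow> rat" where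
  "fsingle a = (\<lambda>q. if q = a then 1 else 0)"

(* generators of the kernel of  Q[C x C] -> Q (x)_Z (C (x)_Z C) / S^2 C = wedge^2 C :
   bi-additivity relations and the relations h (x) h *)
definition wedge_relations :: "((real \<Rightarrow> real) \<times> (real \<Rightarrow> real) \<Rightarrow> rat) set" where
  "wedge_relations =
     {(\<lambda>q. fsingle (cmul f g, h) q - fsingle (f, h) q - fsingle (g, h) q) | f g h.
         f \<in> Cset \<and> g \<in> Cset \<and> h \<in> Cset}
   \<union> {(\<lambda>q. fsingle (f, cmul g h) q - fsingle (f, g) q - fsingle (f, h) q) | f g h.
         f \<in> Cset \<and> g \<in> Cset \<and> h \<in> Cset}
   \<union> {fsingle (h, h) | h. h \<in> Cset}"

definition rat_span :: "('a \<Rightarrow> rat) set \<Rightarrow> ('a \<Rightarrow> rat) set" where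
  "rat_span S = {v. \<exists>(n::nat) (a::nat \<Rightarrow> rat) r. (\<forall>i<n. r i \<in> S) \<and>
                        v = (\<lambda>q. \<Sum>i<n. a i * r i q)}"

(* sum_{l<M} c_l (y_l wedge w_l) = 0 in wedge^2 C  (all y_l, w_l assumed in C) *)
definition wedge_sum_zero ::
  "nat \<Rightarrow> (nat \<Rightarrow> rat) \<Rightarrow> (nat \<Rightarrow> real \<Rightarrow> real) \<Rightarrow> (nat \<Rightarrow> real \<Rightarrow> real) \<Rightarrow> bool" where
  "wedge_sum_zero M c u w \<longleftrightarrow>
     (\<lambda>q. \<Sum>l<M. c l * fsingle (u l, w l) q) \<in> rat_span wedge_relations"

definition Ltilde :: "real poly \<Rightarrow> real \<Rightarrow> real" where
  "Ltilde P x = 1/2 * integral {0..x}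
      (\<lambda>y. ln (poly P y) / y - ln y / poly P y * poly (pderiv P) y)"

definition polyfam :: "real poly \<Rightarrow> (real \<Rightarrow> real) \<Rightarrow> nat \<Rightarrow> real \<Rightarrow> real poly" where
  "polyfam Q p s z = Q + monom (p z) s"

end

theory Submission
  imports Defs "HOL-Real_Asymp.Real_Asymp"
begin

definition PP :: "real poly \<Rightarrow> nat \<Rightarrow> real \<Rightarrow> real poly" where
  "PP Q s a = Q + monom a s"

lemma poly_PP: "poly (PP Q s a) y = poly Q y + a * y ^ s"
  by (simp add: PP_def poly_monom)

lemma poly_ge_coeff0:
  fixes Q :: "real poly"
  assumes "\<forall>i. 0 \<le> coeff Q i" "0 \<le> y"
  shows "coeff Q 0 \<le> poly Q y"
proof -
  have "coeff Q 0 = coeff Q 0 * y ^ 0" by simp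
  also have "\<dots> \<le> (\<Sum>i\<le>degree Q. coeff Q i * y ^ i)"
    by (rule member_le_sum[where f="\<lambda>i. coeff Q i * y ^ i"]) (use assms in auto)
  finally show ?thesis by (simp add: poly_altdef)
qed

lemma PP_ge1:
  assumes "\<forall>i. 0 \<le> coeff Q i" "coeff Q 0 = 1" "0 \<le> a" "0 \<le> y"
  shows "1 \<le> poly (PP Q s a) y"
proof -
  have "0 \<le> a * y ^ s" using assms by simp
  thus ?thesis using poly_ge_coeff0[OF assms(1,4)] assms poly_PP[of Q s a y] by linarith
qed

lemma PP_at0: "1 \<le> s \<Longrightarrow> poly (PP Q s a) 0 = coeff Q 0"
  by (simp add: PP_def poly_0_coeff_0 coeff_monom)

lemma pderiv_PP0: "poly (pderiv (PP Q s a)) 0 = coeff Q 1 + (if s = 1 then a else 0)"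
  by (simp add: PP_def poly_0_coeff_0 coeff_pderiv coeff_monom)

definition hh :: "real poly \<Rightarrow> nat \<Rightarrow> real \<Rightarrow> real \<Rightarrow> real" where
  "hh Q s a y = (if y = 0 then poly (pderiv (PP Q s a)) 0 else ln (poly (PP Q s a) y) / y)"

lemma hh_isCont:
  assumes Qn: "\<forall>i. 0 \<le> coeff Q i" and Q0: "coeff Q 0 = 1" and s: "1 \<le> s"
    and a: "0 \<le> a" and y: "0 \<le> y"
  shows "isCont (hh Q s a) y"
proof (cases "y = 0")
  case True
  let ?P = "PP Q s a"
  have P0: "poly ?P 0 = 1" using PP_at0[OF s] Q0 by simp
  have "((\<lambda>y. ln (poly ?P y)) has_real_derivative (1 / poly ?P 0) * poly (pderiv ?P) 0) (at 0)"
    by (auto intro!: derivative_eq_intros simp: P0)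
  hence "(\<lambda>h. (ln (poly ?P (0 + h)) - ln (poly ?P 0)) / h) \<midarrow>0\<rightarrow> poly (pderiv ?P) 0"
    by (simp add: DERIV_def P0)
  hence "(\<lambda>h. ln (poly ?P h) / h) \<midarrow>0\<rightarrow> poly (pderiv ?P) 0"
    by (simp add: P0)
  moreover have "\<forall>\<^sub>F h in at 0. ln (poly ?P h) / h = hh Q s a h"
    by (auto simp: hh_def eventually_at_filter)
  ultimately have "hh Q s a \<midarrow>0\<rightarrow> poly (pderiv ?P) 0"
    using Lim_transform_eventually by blast
  hence "hh Q s a \<midarrow>0\<rightarrow> hh Q s a 0" by (simp add: hh_def)
  thus ?thesis using True by (simp add: isCont_def)
next
  case False
  hence yp: "0 < y" using y by simp
  have pos: "0 < poly (PP Q s a) y" using PP_ge1[OF Qn Q0 a y, where s=s] by simp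
  have "isCont (\<lambda>y. ln (poly (PP Q s a) y) / y) y"
    using pos yp by (auto intro!: continuous_intros)
  moreover have "\<forall>\<^sub>F x in nhds y. hh Q s a x = ln (poly (PP Q s a) x) / x"
  proof -
    have "\<forall>\<^sub>F x in nhds y. x \<in> {0<..}"
      using eventually_nhds_in_open[of "{0<..}" y] yp by auto
    thus ?thesis by eventually_elim (auto simp: hh_def)
  qed
  ultimately show ?thesis using isCont_cong by metis
qed

lemma hh_cont_on:
  assumes "\<forall>i. 0 \<le> coeff Q i" "coeff Q 0 = 1" "1 \<le> s" "0 \<le> a"
  shows "continuous_on {0..} (hh Q s a)"
  using hh_isCont[OF assms] by (auto intro!: continuous_at_imp_continuous_on)


definition JJ :: "real poly \<Rightarrow> nat \<Rightarrow> real \<Rightarrow> real \<Rightarrow> real" where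
  "JJ Q s a x = integral {0..x} (hh Q s a)"

lemma JJ_dx:
  assumes "\<forall>i. 0 \<le> coeff Q i" "coeff Q 0 = 1" "1 \<le> s" "0 \<le> a" and x: "0 \<le> x"
  shows "((\<lambda>x. JJ Q s a x) has_real_derivative hh Q s a x) (at x within {0..})"
proof -
  have c: "continuous_on {0..x+1} (hh Q s a)"
    by (rule continuous_on_subset[OF hh_cont_on[OF assms(1-4)]]) auto
  have "((\<lambda>u. integral {0..u} (hh Q s a)) has_vector_derivative hh Q s a x) (at x within {0..x+1})"
    by (rule integral_has_vector_derivative[OF c]) (use x in auto)
  moreover have "at x within {0..x+1} = at x within {0..}"
    by (rule at_within_nhd[where S="{..<x+1}"]) auto
  ultimately show ?thesis
    by (simp add: JJ_def has_real_derivative_iff_has_vector_derivative)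
qed

lemma JJ_da:
  assumes Qn: "\<forall>i. 0 \<le> coeff Q i" and Q0: "coeff Q 0 = 1" and s: "1 \<le> s" and a: "0 \<le> a"
    and x: "0 \<le> x"
  shows "((\<lambda>a. JJ Q s a x) has_real_derivative
            integral {0..x} (\<lambda>u. u ^ (s - 1) / poly (PP Q s a) u)) (at a within {0..})"
proof -
  have "((\<lambda>a. integral (cbox 0 x) (hh Q s a)) has_real_derivative
            integral (cbox 0 x) (\<lambda>u. u ^ (s - 1) / poly (PP Q s a) u)) (at a within {0..})"
  proof (rule leibniz_rule_field_derivative[where fx="\<lambda>a u. u ^ (s - 1) / poly (PP Q s a) u"])
    fix b u :: real assume b: "b \<in> {0..}" and u: "u \<in> cbox 0 x"
    show "((\<lambda>a. hh Q s a u) has_real_derivative u ^ (s - 1) / poly (PP Q s b) u) (at b within {0..})"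
    proof (cases "u = 0")
      case True
      have "((\<lambda>a. coeff Q 1 + (if s = 1 then a else 0)) has_real_derivative (if s = 1 then 1 else 0)) (at b within {0..})"
        by (cases "s = 1") (auto intro!: derivative_eq_intros)
      moreover have "u ^ (s - 1) / poly (PP Q s b) u = (if s = 1 then 1 else 0)"
        using True s Q0 PP_at0[OF s, of Q b] by auto
      ultimately show ?thesis using True by (simp add: hh_def pderiv_PP0)
    next
      case False
      hence up: "0 < u" using u by auto
      have pos: "0 < poly Q u + b * u ^ s" using PP_ge1[OF Qn Q0, of b u s] b up by (simp add: poly_PP)
      have "((\<lambda>a. ln (poly Q u + a * u ^ s) / u) has_real_derivative (1 / (poly Q u + b * u ^ s) * u ^ s) / u) (at b within {0..})"
        using pos up by (auto intro!: derivative_eq_intros)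
      moreover have "(1 / (poly Q u + b * u ^ s) * u ^ s) / u = u ^ (s - 1) / poly (PP Q s b) u"
      proof -
        have "u ^ s = u * u ^ (s - 1)" using s by (metis Suc_diff_le diff_Suc_1 power_Suc)
        thus ?thesis using up by (simp add: poly_PP)
      qed
      ultimately show ?thesis using up by (simp add: hh_def poly_PP)
    qed
  next
    fix b :: real assume b: "b \<in> {0..}"
    show "hh Q s b integrable_on cbox 0 x"
      by (rule integrable_continuous[OF continuous_on_subset[OF hh_cont_on[OF Qn Q0 s]]]) (use b in auto)
  next
    have "continuous_on ({0..} \<times> cbox 0 x) (\<lambda>v. snd v ^ (s - 1) / (poly Q (snd v) + fst v * snd v ^ s))"
    proof (intro continuous_intros)
      show "\<forall>v\<in>{0..} \<times> cbox 0 x. poly Q (snd v) + fst v * snd v ^ s \<noteq> 0"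
      proof
        fix v :: "real \<times> real" assume "v \<in> {0..} \<times> cbox 0 x"
        hence "1 \<le> poly (PP Q s (fst v)) (snd v)" using PP_ge1[OF Qn Q0] by auto
        thus "poly Q (snd v) + fst v * snd v ^ s \<noteq> 0" by (simp add: poly_PP)
      qed
    qed
    thus "continuous_on ({0..} \<times> cbox 0 x) (\<lambda>(a, u). u ^ (s - 1) / poly (PP Q s a) u)"
      by (simp add: poly_PP case_prod_beta)
  qed (use a in auto)
  thus ?thesis by (simp add: JJ_def)
qed


lemma JJ_comp:
  assumes Qn: "\<forall>i. 0 \<le> coeff Q i" and Q0: "coeff Q 0 = 1" and s: "1 \<le> s"
    and al: "\<forall>t>0. 0 \<le> \<alpha> t" and yp: "\<forall>t>0. 0 < y t" and z: "0 < z"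
    and da: "(\<alpha> has_real_derivative \<alpha>') (at z)" and dy: "(y has_real_derivative y') (at z)"
  shows "((\<lambda>t. JJ Q s (\<alpha> t) (y t)) has_real_derivative
     integral {0..y z} (\<lambda>u. u ^ (s - 1) / poly (PP Q s (\<alpha> z)) u) * \<alpha>' + y' * hh Q s (\<alpha> z) (y z)) (at z)"
proof -
  define Ja where "Ja = integral {0..y z} (\<lambda>u. u ^ (s - 1) / poly (PP Q s (\<alpha> z)) u)"
  have az: "0 \<le> \<alpha> z" and yz: "0 < y z" using al yp z by auto
  have cont: "continuous_on ({0..} \<times> {0<..}) (\<lambda>v. blinfun_mult_right (ln (poly Q (snd v) + fst v * snd v ^ s) / snd v))"
  proof -
    have pos: "0 < poly Q (snd v) + fst v * snd v ^ s" if v: "v \<in> {0..} \<times> {0<..}" for v :: "real \<times> real"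
    proof -
      have "1 \<le> poly (PP Q s (fst v)) (snd v)" using PP_ge1[OF Qn Q0] v by auto
      thus ?thesis by (simp add: poly_PP)
    qed
    have pos': "poly Q (snd v) + fst v * snd v ^ s \<noteq> 0" if v: "v \<in> {0..} \<times> {0<..}" for v :: "real \<times> real"
      using pos[OF v] by simp
    show ?thesis using pos pos' by (auto intro!: continuous_intros)
  qed
  have cont2: "continuous_on ({0..} \<times> {0<..}) (\<lambda>(a, x). blinfun_mult_right (hh Q s a x))"
    by (rule continuous_on_eq[OF cont]) (auto simp: hh_def poly_PP)
  have D2: "((\<lambda>(a, x). JJ Q s a x) has_derivative
      (\<lambda>(ta, tx). Ja * ta + blinfun_apply (blinfun_mult_right (hh Q s (\<alpha> z) (y z))) tx))
      (at (\<alpha> z, y z) within {0..} \<times> {0<..})"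
  proof (rule has_derivative_partialsI[where fy="\<lambda>a x. blinfun_mult_right (hh Q s a x)"])
    show "((\<lambda>a. JJ Q s a (y z)) has_derivative (*) Ja) (at (\<alpha> z) within {0..})"
      using JJ_da[OF Qn Q0 s az, of "y z"] yz by (simp add: Ja_def has_field_derivative_def)
  next
    fix a x :: real assume a: "a \<in> {0..}" and x: "x \<in> {0<..}"
    have "((\<lambda>x. JJ Q s a x) has_real_derivative hh Q s a x) (at x within {0..})"
      using JJ_dx[OF Qn Q0 s, of a x] a x by auto
    hence "((\<lambda>x. JJ Q s a x) has_real_derivative hh Q s a x) (at x within {0<..})"
      by (rule has_field_derivative_subset) auto
    thus "(JJ Q s a has_derivative blinfun_apply (blinfun_mult_right (hh Q s a x))) (at x within {0<..})"
      by (simp add: has_field_derivative_eq_has_derivative_blinfun)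
  next
    show "continuous (at (\<alpha> z, y z) within {0..} \<times> {0<..}) (\<lambda>(a, x). blinfun_mult_right (hh Q s a x))"
      using cont2 az yz by (simp add: continuous_on_eq_continuous_within)
  qed (use yz in auto)
  have da': "(\<alpha> has_derivative (*) \<alpha>') (at z within {0<..})"
    using has_field_derivative_subset[OF da, of "{0<..}"] unfolding has_field_derivative_def by simp
  have dy': "(y has_derivative (*) y') (at z within {0<..})"
    using has_field_derivative_subset[OF dy, of "{0<..}"] unfolding has_field_derivative_def by simp
  have Dc: "((\<lambda>t. (\<alpha> t, y t)) has_derivative (\<lambda>h. (\<alpha>' * h, y' * h))) (at z within {0<..})"
    by (rule has_derivative_Pair[OF da' dy'])
  have D2': "((\<lambda>(a, x). JJ Q s a x) has_derivative
      (\<lambda>(ta, tx). Ja * ta + blinfun_apply (blinfun_mult_right (hh Q s (\<alpha> z) (y z))) tx))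
      (at ((\<lambda>t. (\<alpha> t, y t)) z) within (\<lambda>t. (\<alpha> t, y t)) ` {0<..})"
    by (rule has_derivative_subset[OF D2]) (use al yp in auto)
  have ch: "((\<lambda>(a, x). JJ Q s a x) \<circ> (\<lambda>t. (\<alpha> t, y t)) has_derivative
      (\<lambda>(ta, tx). Ja * ta + blinfun_apply (blinfun_mult_right (hh Q s (\<alpha> z) (y z))) tx) \<circ> (\<lambda>h. (\<alpha>' * h, y' * h)))
      (at z within {0<..})"
    by (rule diff_chain_within[OF Dc D2'])
  have e1: "(\<lambda>(a, x). JJ Q s a x) \<circ> (\<lambda>t. (\<alpha> t, y t)) = (\<lambda>t. JJ Q s (\<alpha> t) (y t))"
    by (rule ext) simp
  have e2: "(\<lambda>(ta, tx). Ja * ta + blinfun_apply (blinfun_mult_right (hh Q s (\<alpha> z) (y z))) tx) \<circ> (\<lambda>h. (\<alpha>' * h, y' * h))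
      = (\<lambda>h. (Ja * \<alpha>' + y' * hh Q s (\<alpha> z) (y z)) * h)"
    by (rule ext) (simp add: distrib_right)
  have e3: "at z within {0<..} = at z" by (rule at_within_open) (use z in auto)
  have "((\<lambda>t. JJ Q s (\<alpha> t) (y t)) has_derivative (\<lambda>h. (Ja * \<alpha>' + y' * hh Q s (\<alpha> z) (y z)) * h)) (at z)"
    using ch unfolding e1 e2 e3 .
  thus ?thesis unfolding has_field_derivative_def Ja_def .
qed


lemma xlnx_cont: "continuous_on {0..x} (\<lambda>y::real. y * ln y)"
proof (cases "0 < x")
  case True
  have "continuous (at y within {0..x}) (\<lambda>y::real. y * ln y)" if y: "y \<in> {0..x}" for y
  proof (cases "y = 0")
    case True
    have "((\<lambda>x::real. x * ln x) \<longlongrightarrow> 0) (at_right 0)" by real_asymp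
    thus ?thesis using True \<open>0 < x\<close> by (simp add: continuous_within at_within_Icc_at_right)
  next
    case False
    hence "0 < y" using y by auto
    hence "isCont (\<lambda>y::real. y * ln y) y" by (auto intro!: continuous_intros)
    thus ?thesis by (rule continuous_at_imp_continuous_within)
  qed
  thus ?thesis by (simp add: continuous_on_eq_continuous_within)
next
  case False
  hence "{0..x} \<subseteq> {0}" by auto
  thus ?thesis by (rule continuous_on_subset[rotated]) auto
qed

lemma Ltilde_eq:
  assumes Qn: "\<forall>i. 0 \<le> coeff Q i" and Q0: "coeff Q 0 = 1" and s: "1 \<le> s" and a: "0 \<le> a"
    and x: "0 < x"
  shows "Ltilde (PP Q s a) x = JJ Q s a x - 1/2 * ln x * ln (poly (PP Q s a) x)"
proof -
  define P where "P = PP Q s a"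
  define f where "f = (\<lambda>y. ln (poly P y) / y - ln y / poly P y * poly (pderiv P) y)"
  define K where "K = (\<lambda>y. JJ Q s a y - 1/2 * ((y * ln y) * hh Q s a y))"
  define K' where "K' = (\<lambda>y. JJ Q s a y - 1/2 * ln y * ln (poly P y))"
  have KK': "K y = K' y" if "0 < y" for y
    using that by (simp add: K_def K'_def hh_def P_def)
  have K0: "K 0 = 0" by (simp add: K_def JJ_def)
  have contJ: "continuous_on {0..x} (JJ Q s a)"
  proof -
    have "continuous (at y within {0..x}) (JJ Q s a)" if "y \<in> {0..x}" for y
    proof -
      have "((\<lambda>x. JJ Q s a x) has_real_derivative hh Q s a y) (at y within {0..})"
        using JJ_dx[OF Qn Q0 s a, of y] that by auto
      hence "continuous (at y within {0..}) (JJ Q s a)"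
        by (rule DERIV_continuous)
      thus ?thesis by (rule continuous_within_subset) auto
    qed
    thus ?thesis by (simp add: continuous_on_eq_continuous_within)
  qed
  have contK: "continuous_on {0..x} K"
    unfolding K_def
    by (intro continuous_intros contJ xlnx_cont continuous_on_subset[OF hh_cont_on[OF Qn Q0 s a]]) auto
  have derK: "(K has_vector_derivative (1/2 * f y)) (at y)" if y: "y \<in> {0<..<x}" for y
  proof -
    have yp: "0 < y" using y by auto
    have Ppos: "0 < poly P y" using PP_ge1[OF Qn Q0 a, of y s] yp by (simp add: P_def)
    have "((\<lambda>x. JJ Q s a x) has_real_derivative hh Q s a y) (at y within {0..})"
      using JJ_dx[OF Qn Q0 s a, of y] yp by auto
    moreover have "at y within {0..} = at y"
      by (rule at_within_interior) (use yp in auto)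
    ultimately have dJ: "((\<lambda>x. JJ Q s a x) has_real_derivative hh Q s a y) (at y)" by simp
    have "(K' has_real_derivative
        (hh Q s a y - 1/2 * ((1 / y) * ln (poly P y) + ln y * ((1 / poly P y) * poly (pderiv P) y)))) (at y)"
      unfolding K'_def using yp Ppos
      by (auto intro!: derivative_eq_intros dJ) (simp add: field_simps)
    moreover have "hh Q s a y - 1/2 * ((1 / y) * ln (poly P y) + ln y * ((1 / poly P y) * poly (pderiv P) y))
        = 1/2 * f y"
    proof -
      have hy: "hh Q s a y = ln (poly P y) / y" using yp by (simp add: hh_def P_def)
      have gen: "\<And>A B C D E::real. A / B - 1/2 * ((1/B) * A + C * ((1/D) * E)) = 1/2 * (A / B - C / D * E)"
        by argo
      show ?thesis unfolding hy f_def by (rule gen)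
    qed
    ultimately have dK': "(K' has_real_derivative 1/2 * f y) (at y)" by (rule DERIV_cong)
    have evK: "\<forall>\<^sub>F u in nhds y. K u = K' u"
    proof -
      have "\<forall>\<^sub>F u in nhds y. u \<in> {0<..}"
        using eventually_nhds_in_open[of "{0<..}" y] yp by auto
      thus ?thesis by eventually_elim (auto intro: KK')
    qed
    have "(K has_real_derivative 1/2 * f y) (at y) = (K' has_real_derivative 1/2 * f y) (at y)"
      by (rule DERIV_cong_ev[OF refl evK refl])
    hence "(K has_real_derivative 1/2 * f y) (at y)" using dK' by simp
    thus ?thesis by (simp add: has_real_derivative_iff_has_vector_derivative)
  qed
  have I1: "((\<lambda>y. 1/2 * f y) has_integral K x - K 0) {0..x}"
    by (rule fundamental_theorem_of_calculus_interior[OF _ contK derK]) (use x in auto)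
  have "((\<lambda>y. 2 * (1/2 * f y)) has_integral 2 * K x) {0..x}"
    using has_integral_mult_right[OF I1, of 2] K0 by simp
  hence "(f has_integral 2 * K x) {0..x}" by simp
  hence "integral {0..x} f = 2 * K x" by (rule integral_unique)
  hence "Ltilde P x = K x" by (simp add: Ltilde_def f_def)
  thus ?thesis using KK'[OF x] by (simp add: K'_def P_def)
qed


lemma deriv_one:
  assumes Qn: "\<forall>i. 0 \<le> coeff Q i" and Q0: "coeff Q 0 = 1" and s: "1 \<le> s"
    and al: "\<forall>t>0. 0 \<le> \<alpha> t" and yp: "\<forall>t>0. 0 < y t" and z: "0 < z"
    and da: "(\<alpha> has_real_derivative \<alpha>') (at z)" and dy: "(y has_real_derivative y') (at z)"
    and Pf: "\<forall>t>0. Pf t = PP Q s (\<alpha> t)"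
  shows "(\<lambda>t. poly (Pf t) (y t)) differentiable (at z)"
    and "((\<lambda>t. Ltilde (Pf t) (y t)) has_real_derivative
      \<alpha>' * integral {0..y z} (\<lambda>u. u ^ (s - 1) / poly (Pf z) u)
      + 1/2 * (ln (poly (Pf z) (y z)) * y' / y z
               - ln (y z) * deriv (\<lambda>t. poly (Pf t) (y t)) z / poly (Pf z) (y z))) (at z)"
proof -
  define W where "W = (\<lambda>t. poly (Pf t) (y t))"
  define W2 where "W2 = (\<lambda>t. poly Q (y t) + \<alpha> t * y t ^ s)"
  define W2' where "W2' = poly (pderiv Q) (y z) * y' + (\<alpha>' * y z ^ s + \<alpha> z * (real s * y z ^ (s - 1) * y'))"
  have az: "0 \<le> \<alpha> z" and yz: "0 < y z" using al yp z by auto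
  have evpos: "\<forall>\<^sub>F t in nhds z. t \<in> {0<..}"
    using eventually_nhds_in_open[of "{0<..}" z] z by auto
  have evW: "\<forall>\<^sub>F t in nhds z. W t = W2 t"
    using evpos by eventually_elim (auto simp: W_def W2_def Pf poly_PP)
  have W2z: "W2 z = W z" by (simp add: W_def W2_def Pf z poly_PP)
  have Wpos: "1 \<le> W z" using PP_ge1[OF Qn Q0 az, of "y z" s] yz by (simp add: W_def Pf z)
  have dW2: "(W2 has_real_derivative W2') (at z)"
    unfolding W2_def W2'_def
    by (auto intro!: derivative_eq_intros da dy)
  have dW: "(W has_real_derivative W2') (at z)"
    using DERIV_cong_ev[OF refl evW refl] dW2 by simp
  thus "(\<lambda>t. poly (Pf t) (y t)) differentiable (at z)"
    unfolding W_def using real_differentiable_def by blast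
  have derivW: "deriv W z = W2'" using dW by (rule DERIV_imp_deriv)
  define G where "G = (\<lambda>t. JJ Q s (\<alpha> t) (y t) - 1/2 * ln (y t) * ln (W2 t))"
  have evG: "\<forall>\<^sub>F t in nhds z. Ltilde (Pf t) (y t) = G t"
    using evpos
  proof eventually_elim
    case (elim t)
    hence "0 < t" by simp
    thus ?case using Ltilde_eq[OF Qn Q0 s, of "\<alpha> t" "y t"] al yp
      by (simp add: G_def W2_def Pf poly_PP)
  qed
  define Ja where "Ja = integral {0..y z} (\<lambda>u. u ^ (s - 1) / poly (PP Q s (\<alpha> z)) u)"
  have dJ: "((\<lambda>t. JJ Q s (\<alpha> t) (y t)) has_real_derivative Ja * \<alpha>' + y' * hh Q s (\<alpha> z) (y z)) (at z)"
    unfolding Ja_def by (rule JJ_comp[OF Qn Q0 s al yp z da dy])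
  have W2pos: "0 < W2 z" using Wpos W2z by simp
  have dG: "(G has_real_derivative
       (Ja * \<alpha>' + y' * hh Q s (\<alpha> z) (y z)) - 1/2 * ((1 / y z * y') * ln (W2 z) + ln (y z) * (1 / W2 z * W2'))) (at z)"
    unfolding G_def using yz W2pos by (auto intro!: derivative_eq_intros dJ dy dW2) (simp add: field_simps)
  have hz: "hh Q s (\<alpha> z) (y z) = ln (W z) / y z"
    using yz W2z by (simp add: hh_def W_def Pf z)
  have eqv: "(Ja * \<alpha>' + y' * hh Q s (\<alpha> z) (y z)) - 1/2 * ((1 / y z * y') * ln (W2 z) + ln (y z) * (1 / W2 z * W2'))
     = \<alpha>' * Ja + 1/2 * (ln (W z) * y' / y z - ln (y z) * W2' / W z)"
  proof -
    have gen: "\<And>J a' Y' L Yz LY W2' Wz::real. J * a' + Y' * (L / Yz) - 1/2 * ((1 / Yz * Y') * L + LY * (1 / Wz * W2'))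
       = a' * J + 1/2 * (L * Y' / Yz - LY * W2' / Wz)"
      by argo
    show ?thesis unfolding hz W2z by (rule gen)
  qed
  have "((\<lambda>t. Ltilde (Pf t) (y t)) has_real_derivative \<alpha>' * Ja + 1/2 * (ln (W z) * y' / y z - ln (y z) * W2' / W z)) (at z)"
  proof -
    have dG2: "(G has_real_derivative \<alpha>' * Ja + 1/2 * (ln (W z) * y' / y z - ln (y z) * W2' / W z)) (at z)"
      using dG unfolding eqv .
    show ?thesis by (subst DERIV_cong_ev[OF refl evG refl]) (rule dG2)
  qed
  thus "((\<lambda>t. Ltilde (Pf t) (y t)) has_real_derivative
      \<alpha>' * integral {0..y z} (\<lambda>u. u ^ (s - 1) / poly (Pf z) u)
      + 1/2 * (ln (poly (Pf z) (y z)) * y' / y z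
               - ln (y z) * deriv (\<lambda>t. poly (Pf t) (y t)) z / poly (Pf z) (y z))) (at z)"
    using derivW by (simp add: Ja_def W_def Pf z)
qed


definition fw :: "real \<Rightarrow> (real \<Rightarrow> real) \<times> (real \<Rightarrow> real) \<Rightarrow> real" where
  "fw z q = ln (snd q z) * deriv (fst q) z / fst q z - ln (fst q z) * deriv (snd q) z / snd q z"

lemma Cset_D:
  assumes "f \<in> Cset" "0 < z"
  shows "0 < f z" "(f has_real_derivative deriv f z) (at z)"
  using assms by (auto simp: Cset_def DERIV_deriv_iff_real_differentiable)

lemma deriv_cmul:
  assumes "f \<in> Cset" "g \<in> Cset" "0 < z"
  shows "deriv (cmul f g) z = deriv f z * g z + f z * deriv g z"
proof -
  have "(cmul f g has_real_derivative deriv f z * g z + f z * deriv g z) (at z)"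
    unfolding cmul_def using DERIV_mult[OF Cset_D(2)[OF assms(1,3)] Cset_D(2)[OF assms(2,3)]] by (simp add: mult.commute)
  thus ?thesis by (rule DERIV_imp_deriv)
qed

lemma fw_mul1:
  assumes "f \<in> Cset" "g \<in> Cset" "h \<in> Cset" "0 < z"
  shows "fw z (cmul f g, h) = fw z (f, h) + fw z (g, h)"
proof -
  have f: "0 < f z" and g: "0 < g z" and h: "0 < h z" using Cset_D(1) assms by auto
  have l: "ln (f z * g z) = ln (f z) + ln (g z)" using f g by (simp add: ln_mult)
  show ?thesis using f g h
    by (simp add: fw_def deriv_cmul[OF assms(1,2,4)] l) (simp add: cmul_def l field_simps)
qed

lemma fw_mul2:
  assumes "f \<in> Cset" "g \<in> Cset" "h \<in> Cset" "0 < z"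
  shows "fw z (f, cmul g h) = fw z (f, g) + fw z (f, h)"
proof -
  have f: "0 < f z" and g: "0 < g z" and h: "0 < h z" using Cset_D(1) assms by auto
  have l: "ln (g z * h z) = ln (g z) + ln (h z)" using g h by (simp add: ln_mult)
  show ?thesis using f g h
    by (simp add: fw_def deriv_cmul[OF assms(2,3,4)] l) (simp add: cmul_def l field_simps)
qed

lemma fw_diag: "fw z (h, h) = 0"
  by (simp add: fw_def)

lemma sum_fsingle:
  assumes "finite T" "A \<in> T"
  shows "(\<Sum>q\<in>T. real_of_rat (fsingle A q) * \<phi> q) = \<phi> A"
proof -
  have "(\<Sum>q\<in>T. real_of_rat (fsingle A q) * \<phi> q) = (\<Sum>q\<in>T. if A = q then \<phi> q else 0)"
    by (rule sum.cong) (auto simp: fsingle_def)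
  also have "\<dots> = \<phi> A" using assms by simp
  finally show ?thesis .
qed

lemma sum_fsingle3:
  assumes "finite T" "A \<in> T" "B \<in> T" "C \<in> T"
  shows "(\<Sum>q\<in>T. real_of_rat (fsingle A q - fsingle B q - fsingle C q) * \<phi> q) = \<phi> A - \<phi> B - \<phi> C"
proof -
  have "(\<Sum>q\<in>T. real_of_rat (fsingle A q - fsingle B q - fsingle C q) * \<phi> q)
     = (\<Sum>q\<in>T. real_of_rat (fsingle A q) * \<phi> q) - (\<Sum>q\<in>T. real_of_rat (fsingle B q) * \<phi> q)
       - (\<Sum>q\<in>T. real_of_rat (fsingle C q) * \<phi> q)"
    by (simp add: of_rat_diff left_diff_distrib sum_subtractf)
  thus ?thesis using sum_fsingle[OF assms(1)] assms by simp
qed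

lemma rel_cases:
  assumes "r \<in> wedge_relations"
  obtains (a) f g h where "f \<in> Cset" "g \<in> Cset" "h \<in> Cset"
        "r = (\<lambda>q. fsingle (cmul f g, h) q - fsingle (f, h) q - fsingle (g, h) q)"
    | (b) f g h where "f \<in> Cset" "g \<in> Cset" "h \<in> Cset"
        "r = (\<lambda>q. fsingle (f, cmul g h) q - fsingle (f, g) q - fsingle (f, h) q)"
    | (c) h where "h \<in> Cset" "r = fsingle (h, h)"
  using assms unfolding wedge_relations_def by blast

lemma rel_support:
  assumes "r \<in> wedge_relations"
  shows "finite {q. r q \<noteq> 0}"
  using assms
proof (cases rule: rel_cases)
  case (a f g h)
  have "{q. r q \<noteq> 0} \<subseteq> {(cmul f g, h), (f, h), (g, h)}" by (auto simp: a(4) fsingle_def)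
  thus ?thesis by (rule finite_subset) simp
next
  case (b f g h)
  have "{q. r q \<noteq> 0} \<subseteq> {(f, cmul g h), (f, g), (f, h)}" by (auto simp: b(4) fsingle_def)
  thus ?thesis by (rule finite_subset) simp
next
  case (c h)
  have "{q. r q \<noteq> 0} \<subseteq> {(h, h)}" by (auto simp: c(2) fsingle_def)
  thus ?thesis by (rule finite_subset) simp
qed

lemma rel_zero:
  assumes r: "r \<in> wedge_relations" and z: "0 < z" and T: "finite T" "{q. r q \<noteq> 0} \<subseteq> T"
  shows "(\<Sum>q\<in>T. real_of_rat (r q) * fw z q) = 0"
proof -
  have ext: "(\<Sum>q\<in>T. real_of_rat (r q) * fw z q) = (\<Sum>q\<in>T \<union> X. real_of_rat (r q) * fw z q)"
    if "finite X" for X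
    by (rule sum.mono_neutral_left) (use T that in auto)
  from r show ?thesis
  proof (cases rule: rel_cases)
    case (a f g h)
    have "(\<Sum>q\<in>T. real_of_rat (r q) * fw z q)
        = (\<Sum>q\<in>T \<union> {(cmul f g, h), (f, h), (g, h)}. real_of_rat (r q) * fw z q)"
      by (rule ext) simp
    also have "\<dots> = fw z (cmul f g, h) - fw z (f, h) - fw z (g, h)"
      unfolding a(4) by (rule sum_fsingle3) (use T in auto)
    also have "\<dots> = 0" using fw_mul1[OF a(1-3) z] by simp
    finally show ?thesis .
  next
    case (b f g h)
    have "(\<Sum>q\<in>T. real_of_rat (r q) * fw z q)
        = (\<Sum>q\<in>T \<union> {(f, cmul g h), (f, g), (f, h)}. real_of_rat (r q) * fw z q)"
      by (rule ext) simp
    also have "\<dots> = fw z (f, cmul g h) - fw z (f, g) - fw z (f, h)"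
      unfolding b(4) by (rule sum_fsingle3) (use T in auto)
    also have "\<dots> = 0" using fw_mul2[OF b(1-3) z] by simp
    finally show ?thesis .
  next
    case (c h)
    have "(\<Sum>q\<in>T. real_of_rat (r q) * fw z q)
        = (\<Sum>q\<in>T \<union> {(h, h)}. real_of_rat (r q) * fw z q)"
      by (rule ext) simp
    also have "\<dots> = fw z (h, h)"
      unfolding c(2) by (rule sum_fsingle) (use T in auto)
    also have "\<dots> = 0" by (rule fw_diag)
    finally show ?thesis .
  qed
qed

lemma wedge_zero:
  assumes z: "0 < z" and w: "wedge_sum_zero M c u w"
  shows "(\<Sum>l<M. real_of_rat (c l) * fw z (u l, w l)) = 0"
proof -
  have "\<exists>n a r. (\<forall>i<n. r i \<in> wedge_relations) \<and>
     (\<lambda>q. \<Sum>l<M. c l * fsingle (u l, w l) q) = (\<lambda>q. \<Sum>i<(n::nat). a i * r i q)"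
    using w unfolding wedge_sum_zero_def rat_span_def by (simp only: mem_Collect_eq)
  then obtain n :: nat and a r where nar: "(\<forall>i<n. r i \<in> wedge_relations) \<and>
     (\<lambda>q. \<Sum>l<M. c l * fsingle (u l, w l) q) = (\<lambda>q. \<Sum>i<n. a i * r i q)"
    by (elim exE) (rule that)
  have r: "\<forall>i<n. r i \<in> wedge_relations" using nar by (rule conjunct1)
  have eq: "(\<lambda>q. \<Sum>l<M. c l * fsingle (u l, w l) q) = (\<lambda>q. \<Sum>i<n. a i * r i q)" using nar by (rule conjunct2)
  define S where "S = (\<lambda>l. (u l, w l)) ` {..<M} \<union> (\<Union>i<n. {q. r i q \<noteq> 0})"
  have finS: "finite S" unfolding S_def using rel_support r by auto
  have "(\<Sum>q\<in>S. real_of_rat (\<Sum>l<M. c l * fsingle (u l, w l) q) * fw z q)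
      = (\<Sum>q\<in>S. real_of_rat (\<Sum>i<n. a i * r i q) * fw z q)"
    using eq by metis
  moreover have "(\<Sum>q\<in>S. real_of_rat (\<Sum>l<M. c l * fsingle (u l, w l) q) * fw z q)
      = (\<Sum>l<M. real_of_rat (c l) * fw z (u l, w l))"
  proof -
    have "(\<Sum>q\<in>S. real_of_rat (\<Sum>l<M. c l * fsingle (u l, w l) q) * fw z q)
        = (\<Sum>l<M. real_of_rat (c l) * (\<Sum>q\<in>S. real_of_rat (fsingle (u l, w l) q) * fw z q))"
      by (simp add: of_rat_sum of_rat_mult sum_distrib_left sum_distrib_right mult.assoc sum.swap[of _ S])
    also have "\<dots> = (\<Sum>l<M. real_of_rat (c l) * fw z (u l, w l))"
      by (rule sum.cong[OF refl]) (subst sum_fsingle[OF finS], auto simp: S_def)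
    finally show ?thesis .
  qed
  moreover have "(\<Sum>q\<in>S. real_of_rat (\<Sum>i<n. a i * r i q) * fw z q) = 0"
  proof -
    have "(\<Sum>q\<in>S. real_of_rat (\<Sum>i<n. a i * r i q) * fw z q)
        = (\<Sum>i<n. real_of_rat (a i) * (\<Sum>q\<in>S. real_of_rat (r i q) * fw z q))"
      by (simp add: of_rat_sum of_rat_mult sum_distrib_left sum_distrib_right mult.assoc sum.swap[of _ S])
    also have "\<dots> = 0"
    proof -
      have "(\<Sum>q\<in>S. real_of_rat (r i q) * fw z q) = 0" if "i < n" for i
        by (rule rel_zero[OF _ z finS]) (use that r in \<open>auto simp: S_def\<close>)
      thus ?thesis by simp
    qed
    finally show ?thesis .
  qed
  ultimately show ?thesis by simp
qed


lemma per_l: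
  assumes Qn: "\<forall>i. 0 \<le> coeff Q i" and pn: "\<forall>t>0. 0 \<le> p t"
    and pd: "\<forall>t>0. p differentiable (at t)"
    and at0: "\<forall>t>0. poly (polyfam Q p s t) 0 = 1" and yC: "y \<in> Cset" and z: "0 < z"
  shows "((\<lambda>t. Ltilde (polyfam Q p s t) (y t)) has_real_derivative
     deriv p z * integral {0..y z} (\<lambda>u. u powi (int s - 1) / poly (polyfam Q p s z) u)
     + 1/2 * fw z (y, cnorm (\<lambda>t. poly (polyfam Q p s t) (y t)))) (at z)"
proof -
  define Pf where "Pf = (\<lambda>t. polyfam Q p s t)"
  define W where "W = (\<lambda>t. poly (Pf t) (y t))"
  have yp: "\<forall>t>0. 0 < y t" using yC by (auto simp: Cset_def)
  have dy: "(y has_real_derivative deriv y z) (at z)" by (rule Cset_D(2)[OF yC z])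
  have dp: "(p has_real_derivative deriv p z) (at z)"
    using pd z by (simp add: DERIV_deriv_iff_real_differentiable)
  have evpos: "\<forall>\<^sub>F t in nhds z. t \<in> {0<..}"
    using eventually_nhds_in_open[of "{0<..}" z] z by auto
  have cW: "deriv (cnorm W) z = deriv W z"
    by (rule deriv_cong_ev[OF _ refl]) (use evpos in \<open>eventually_elim, simp add: cnorm_def\<close>)
  have fwe: "fw z (y, cnorm W) = ln (W z) * deriv y z / y z - ln (y z) * deriv W z / W z"
    using z cW by (simp add: fw_def cnorm_def)
  have key: "\<exists>A. deriv p z = A \<and>
      ((\<lambda>t. Ltilde (Pf t) (y t)) has_real_derivative
        A * integral {0..y z} (\<lambda>u. u powi (int s - 1) / poly (Pf z) u)
        + 1/2 * (ln (W z) * deriv y z / y z - ln (y z) * deriv W z / W z)) (at z)"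
  proof (cases "s = 0")
    case False
    hence s: "1 \<le> s" by simp
    have Q0: "coeff Q 0 = 1" using at0 z s by (auto simp: polyfam_def poly_0_coeff_0 coeff_monom)
    have Pf': "\<forall>t>0. Pf t = PP Q s (p t)" by (simp add: Pf_def polyfam_def PP_def)
    have pw: "(\<lambda>u. u powi (int s - 1) / poly (Pf z) u) = (\<lambda>u. u ^ (s - 1) / poly (Pf z) u)"
    proof -
      have e: "int s - 1 = int (s - 1)" using s by simp
      show ?thesis by (simp only: e power_int_of_nat)
    qed
    show ?thesis
    proof (intro exI[of _ "deriv p z"] conjI refl)
      show "((\<lambda>t. Ltilde (Pf t) (y t)) has_real_derivative
        deriv p z * integral {0..y z} (\<lambda>u. u powi (int s - 1) / poly (Pf z) u)
        + 1/2 * (ln (W z) * deriv y z / y z - ln (y z) * deriv W z / W z)) (at z)"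
        using deriv_one(2)[OF Qn Q0 s pn yp z dp dy Pf'] unfolding pw W_def .
    qed
  next
    case True
    define k where "k = 1 - coeff Q 0"
    have pk: "p t = k" if "0 < t" for t
    proof -
      have "poly (polyfam Q p s t) 0 = 1" using at0 that by auto
      thus ?thesis using True by (simp add: polyfam_def poly_0_coeff_0 k_def)
    qed
    define P0 where "P0 = Q + monom k 0"
    define c1 where "c1 = coeff P0 1"
    define Q' where "Q' = P0 - monom c1 1"
    have Pf': "\<forall>t>0. Pf t = PP Q' 1 ((\<lambda>_. c1) t)"
      using pk True by (simp add: Pf_def polyfam_def PP_def Q'_def P0_def)
    have kn: "0 \<le> k" using pk[OF z] pn z by auto
    have Qn': "\<forall>i. 0 \<le> coeff Q' i"
      using Qn kn by (auto simp: Q'_def P0_def c1_def coeff_monom)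
    have Q0': "coeff Q' 0 = 1" by (simp add: Q'_def P0_def k_def coeff_monom)
    have cn: "\<forall>t>0. 0 \<le> (\<lambda>_. c1) t" using Qn by (simp add: c1_def P0_def coeff_monom)
    have dc: "((\<lambda>_. c1) has_real_derivative 0) (at z)" by simp
    have dp0: "deriv p z = 0"
    proof -
      have "deriv p z = deriv (\<lambda>_. k) z"
        by (rule deriv_cong_ev[OF _ refl]) (use evpos in \<open>eventually_elim, simp add: pk\<close>)
      thus ?thesis by simp
    qed
    have d0: "((\<lambda>t. Ltilde (Pf t) (y t)) has_real_derivative
        0 * integral {0..y z} (\<lambda>u. u ^ (1 - 1) / poly (Pf z) u)
        + 1/2 * (ln (W z) * deriv y z / y z - ln (y z) * deriv W z / W z)) (at z)"
      using deriv_one(2)[OF Qn' Q0' order.refl cn yp z dc dy Pf'] unfolding W_def .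
    have e: "0 * integral {0..y z} (\<lambda>u. u ^ (1 - 1) / poly (Pf z) u)
       = 0 * integral {0..y z} (\<lambda>u. u powi (int s - 1) / poly (Pf z) u)"
      by (simp only: mult_zero_left)
    show ?thesis
    proof (intro exI[of _ 0] conjI dp0)
      show "((\<lambda>t. Ltilde (Pf t) (y t)) has_real_derivative
        0 * integral {0..y z} (\<lambda>u. u powi (int s - 1) / poly (Pf z) u)
        + 1/2 * (ln (W z) * deriv y z / y z - ln (y z) * deriv W z / W z)) (at z)"
        using d0 unfolding e .
    qed
  qed
  then obtain A where A: "deriv p z = A" and
    dA: "((\<lambda>t. Ltilde (Pf t) (y t)) has_real_derivative
        A * integral {0..y z} (\<lambda>u. u powi (int s - 1) / poly (Pf z) u)
        + 1/2 * (ln (W z) * deriv y z / y z - ln (y z) * deriv W z / W z)) (at z)"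
    by blast
  show ?thesis using dA unfolding A fwe[unfolded W_def Pf_def] W_def Pf_def .
qed


theorem mainTheorem9:
  fixes M :: nat and Q :: "nat \<Rightarrow> real poly" and s :: "nat \<Rightarrow> nat"
    and p :: "nat \<Rightarrow> real \<Rightarrow> real" and y :: "nat \<Rightarrow> real \<Rightarrow> real"
    and c :: "nat \<Rightarrow> rat" and z :: real
  assumes coeff_s: "\<forall>l<M. coeff (Q l) (s l) = 0"
    and coeff_nonneg: "\<forall>l<M. \<forall>i. 0 \<le> coeff (Q l) i"
    and p_nonneg: "\<forall>l<M. \<forall>t>0. 0 \<le> p l t"
    and p_diff: "\<forall>l<M. \<forall>t>0. p l differentiable (at t)"
    and monic: "\<forall>l<M. \<forall>t>0. lead_coeff (polyfam (Q l) (p l) (s l) t) = 1"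
    and at0: "\<forall>l<M. \<forall>t>0. poly (polyfam (Q l) (p l) (s l) t) 0 = 1"
    and yC: "\<forall>l<M. y l \<in> Cset"
    and wedge: "wedge_sum_zero M c y
                  (\<lambda>l. cnorm (\<lambda>t. poly (polyfam (Q l) (p l) (s l) t) (y l t)))"
    and z: "0 < z"
  shows "((\<lambda>t. \<Sum>l<M. real_of_rat (c l) * Ltilde (polyfam (Q l) (p l) (s l) t) (y l t))
          has_real_derivative
          (\<Sum>l<M. real_of_rat (c l) * deriv (p l) z *
              integral {0..y l z}
                (\<lambda>u. u powi (int (s l) - 1) / poly (polyfam (Q l) (p l) (s l) z) u)))
         (at z)"
proof -
  define W where "W = (\<lambda>l. cnorm (\<lambda>t. poly (polyfam (Q l) (p l) (s l) t) (y l t)))"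
  define I where "I = (\<lambda>l. integral {0..y l z}
                (\<lambda>u. u powi (int (s l) - 1) / poly (polyfam (Q l) (p l) (s l) z) u))"
  have dl: "((\<lambda>t. real_of_rat (c l) * Ltilde (polyfam (Q l) (p l) (s l) t) (y l t)) has_real_derivative
      real_of_rat (c l) * (deriv (p l) z * I l + 1/2 * fw z (y l, W l))) (at z)" if l: "l \<in> {..<M}" for l
  proof -
    have "((\<lambda>t. Ltilde (polyfam (Q l) (p l) (s l) t) (y l t)) has_real_derivative
        deriv (p l) z * I l + 1/2 * fw z (y l, W l)) (at z)"
      unfolding I_def W_def
      by (rule per_l) (use l coeff_nonneg p_nonneg p_diff at0 yC z in auto)
    thus ?thesis by (rule DERIV_cmult)
  qed
  have D: "((\<lambda>t. \<Sum>l<M. real_of_rat (c l) * Ltilde (polyfam (Q l) (p l) (s l) t) (y l t)) has_real_derivative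
      (\<Sum>l<M. real_of_rat (c l) * (deriv (p l) z * I l + 1/2 * fw z (y l, W l)))) (at z)"
    by (rule DERIV_sum) (rule dl)
  have wz: "(\<Sum>l<M. real_of_rat (c l) * fw z (y l, W l)) = 0"
    using wedge_zero[OF z wedge] unfolding W_def .
  have "(\<Sum>l<M. real_of_rat (c l) * (deriv (p l) z * I l + 1/2 * fw z (y l, W l)))
      = (\<Sum>l<M. real_of_rat (c l) * deriv (p l) z * I l) + 1/2 * (\<Sum>l<M. real_of_rat (c l) * fw z (y l, W l))"
    by (simp add: distrib_left sum.distrib sum_distrib_left mult_ac)
  also have "\<dots> = (\<Sum>l<M. real_of_rat (c l) * deriv (p l) z * I l)" using wz by simp
  finally have eq: "(\<Sum>l<M. real_of_rat (c l) * (deriv (p l) z * I l + 1/2 * fw z (y l, W l)))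
      = (\<Sum>l<M. real_of_rat (c l) * deriv (p l) z * I l)" .
  have D2: "((\<lambda>t. \<Sum>l<M. real_of_rat (c l) * Ltilde (polyfam (Q l) (p l) (s l) t) (y l t)) has_real_derivative
      (\<Sum>l<M. real_of_rat (c l) * deriv (p l) z * I l)) (at z)"
    using D unfolding eq .
  show ?thesis using D2 unfolding I_def .
qed

end
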